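(* Let $\alpha$ be a countable ordinal and let $P\in\mathbb{J}_\alpha$. If $P$ is embeddable in $[\omega]^{<\omega}$ by a map preserving finite joins, then there is a sierpinskisation $S$ of $\alpha$ and $\omega$ such that $I_{<\omega}(S)\in\mathbb{J}_\alpha$ and $I_{<\omega}(S)$ is embeddable in $P$ by a map preserving finite joins.
   Context: $\mathbb{J}_\alpha$ is the class of join-semilattices $P$ with a least element such that the lattice $J(P)$ of ideals (non-empty up-directed initial segments, ordered by inclusion) of $P$ contains a chain of order type $I(\alpha)$, the type of the chain of all initial segments of a chain of type $\alpha$. $[\omega]^{<\omega}$ is the set of finite subsets of $\mathbb{N}$ ordered by inclusion. A sierpinskisation of $\alpha$ and $\omega$ is a poset whose order is the intersection of two linear orders on its underlying set, one of type $\alpha$ and one of type $\omega$. $I_{<\omega}(S)$ is the set of finitely generated initial segments of $S$ ordered by inclusion. A map preserves finite joins if $f(\bigvee X)=\bigvee f(X)$ for every finite $X$ (including $X=\emptyset$). *)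

theory Defs
  imports Main "HOL-Library.Countable_Set"
begin

text \<open>Posets are represented as relations; the carrier is the Field.\<close>

definition ord_iso :: "'a rel \<Rightarrow> 'b rel \<Rightarrow> bool" where
  "ord_iso r s \<longleftrightarrow> (\<exists>f. bij_betw f (Field r) (Field s) \<and>
     (\<forall>a\<in>Field r. \<forall>b\<in>Field r. (a,b) \<in> r \<longleftrightarrow> (f a, f b) \<in> s))"

definition incl_rel :: "'a set set \<Rightarrow> 'a set rel" where
  "incl_rel A = {(X,Y). X \<in> A \<and> Y \<in> A \<and> X \<subseteq> Y}"

definition is_lub :: "'a rel \<Rightarrow> 'a set \<Rightarrow> 'a \<Rightarrow> bool" where
  "is_lub P X x \<longleftrightarrow> x \<in> Field P \<and> (\<forall>y\<in>X. (y,x) \<in> P) \<and>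
     (\<forall>z\<in>Field P. (\<forall>y\<in>X. (y,z) \<in> P) \<longrightarrow> (x,z) \<in> P)"

definition join_semilattice_bot :: "'a rel \<Rightarrow> bool" where
  "join_semilattice_bot P \<longleftrightarrow> Partial_order P \<and>
     (\<exists>b\<in>Field P. \<forall>x\<in>Field P. (b,x) \<in> P) \<and>
     (\<forall>x\<in>Field P. \<forall>y\<in>Field P. \<exists>z. is_lub P {x,y} z)"

definition ideals :: "'a rel \<Rightarrow> 'a set set" where
  "ideals P = {I. I \<subseteq> Field P \<and> I \<noteq> {} \<and>
     (\<forall>x\<in>I. \<forall>y. (y,x) \<in> P \<longrightarrow> y \<in> I) \<and>
     (\<forall>x\<in>I. \<forall>y\<in>I. \<exists>z\<in>I. (x,z) \<in> P \<and> (y,z) \<in> P)}"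

definition init_segs :: "'a rel \<Rightarrow> 'a set set" where
  "init_segs r = {X. X \<subseteq> Field r \<and> (\<forall>x\<in>X. \<forall>y. (y,x) \<in> r \<longrightarrow> y \<in> X)}"

text \<open>The class J_alpha, alpha given by a well-order r.\<close>
definition J_alpha :: "'a rel \<Rightarrow> 'p rel \<Rightarrow> bool" where
  "J_alpha r P \<longleftrightarrow> join_semilattice_bot P \<and>
     (\<exists>C \<subseteq> ideals P. ord_iso (incl_rel C) (incl_rel (init_segs r)))"

text \<open>Order embedding preserving finite joins (including the empty join).\<close>
definition join_emb :: "'a rel \<Rightarrow> 'b rel \<Rightarrow> ('a \<Rightarrow> 'b) \<Rightarrow> bool" where
  "join_emb P Q f \<longleftrightarrow> f ` Field P \<subseteq> Field Q \<and>
     (\<forall>x\<in>Field P. \<forall>y\<in>Field P. (x,y) \<in> P \<longleftrightarrow> (f x, f y) \<in> Q) \<and>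
     (\<forall>X x. finite X \<and> X \<subseteq> Field P \<and> is_lub P X x \<longrightarrow> is_lub Q (f ` X) (f x))"

definition fin_subsets_nat :: "nat set rel" where
  "fin_subsets_nat = incl_rel {X. finite X}"

definition omega_rel :: "nat rel" where
  "omega_rel = {(x,y). x \<le> y}"

definition sierpinskisation :: "'a rel \<Rightarrow> 's rel \<Rightarrow> bool" where
  "sierpinskisation r S \<longleftrightarrow> (\<exists>L1 L2. Linear_order L1 \<and> Linear_order L2 \<and>
     Field L1 = Field L2 \<and> S = L1 \<inter> L2 \<and> ord_iso L1 r \<and> ord_iso L2 omega_rel)"

definition fg_init_segs :: "'s rel \<Rightarrow> 's set rel" where
  "fg_init_segs S = incl_rel {{y \<in> Field S. \<exists>x\<in>F. (y,x) \<in> S} | F. finite F \<and> F \<subseteq> Field S}"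

end

theory Submission
  imports Defs "HOL-Library.Nat_Bijection"
begin


lemma Field_incl_rel[simp]: "Field (incl_rel A) = A"
  unfolding incl_rel_def Field_def by auto

lemma incl_rel_iff[simp]: "(X,Y) \<in> incl_rel A \<longleftrightarrow> X \<in> A \<and> Y \<in> A \<and> X \<subseteq> Y"
  unfolding incl_rel_def by auto

lemma is_lub_unique:
  assumes "antisym P" "is_lub P X x" "is_lub P X x'" shows "x = x'"
  using assms unfolding is_lub_def antisym_def by blast

lemma antisym_incl_rel: "antisym (incl_rel A)"
  unfolding antisym_def by auto

lemma is_lub_incl_Union:
  assumes "\<Union>X \<in> A" "X \<subseteq> A" shows "is_lub (incl_rel A) X (\<Union>X)"
  using assms unfolding is_lub_def by auto

lemma is_lub_incl_iff:
  assumes "\<Union>X \<in> A" "X \<subseteq> A" shows "is_lub (incl_rel A) X D \<longleftrightarrow> D = \<Union>X"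
  using is_lub_unique[OF antisym_incl_rel] is_lub_incl_Union[OF assms] by blast

lemma ord_isoI:
  assumes "bij_betw g (Field L) (Field M)"
    "\<And>a b. a \<in> Field L \<Longrightarrow> b \<in> Field L \<Longrightarrow> (a,b) \<in> L \<longleftrightarrow> (g a, g b) \<in> M"
  shows "ord_iso L M"
  using assms unfolding ord_iso_def by blast

lemma ord_iso_incl_rel:
  assumes "inj_on \<Phi> B" "\<Phi> ` B = A"
    "\<And>X Y. X \<in> B \<Longrightarrow> Y \<in> B \<Longrightarrow> X \<subseteq> Y \<longleftrightarrow> \<Phi> X \<subseteq> \<Phi> Y"
  shows "ord_iso (incl_rel A) (incl_rel B)"
proof (rule ord_isoI)
  let ?g = "the_inv_into B \<Phi>"
  have bij: "bij_betw \<Phi> B A" using assms unfolding bij_betw_def by auto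
  show "bij_betw ?g (Field (incl_rel A)) (Field (incl_rel B))"
    using bij_betw_the_inv_into[OF bij] by simp
  fix a b assume "a \<in> Field (incl_rel A)" "b \<in> Field (incl_rel A)"
  then obtain X Y where XY: "X \<in> B" "Y \<in> B" "a = \<Phi> X" "b = \<Phi> Y" using assms(2) by auto
  have "?g a = X" "?g b = Y" using XY assms(1) by (simp_all add: the_inv_into_f_f)
  then show "(a,b) \<in> incl_rel A \<longleftrightarrow> (?g a, ?g b) \<in> incl_rel B"
    using XY assms(2) assms(3)[of X Y] by auto
qed

lemma join_embD:
  assumes "join_emb P Q f"
  shows "f ` Field P \<subseteq> Field Q"
    "\<And>x y. x \<in> Field P \<Longrightarrow> y \<in> Field P \<Longrightarrow> (x,y) \<in> P \<longleftrightarrow> (f x, f y) \<in> Q"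
    "\<And>X x. finite X \<Longrightarrow> X \<subseteq> Field P \<Longrightarrow> is_lub P X x \<Longrightarrow> is_lub Q (f ` X) (f x)"
  using assms unfolding join_emb_def by blast+

lemma fin_field: "Field fin_subsets_nat = {X. finite X}"
  unfolding fin_subsets_nat_def by simp

lemma f_finite:
  assumes "join_emb P fin_subsets_nat f" "x \<in> Field P" shows "finite (f x)"
  using join_embD(1)[OF assms(1)] assms(2) fin_field by blast

lemma f_ord:
  assumes "join_emb P fin_subsets_nat f" "x \<in> Field P" "y \<in> Field P"
  shows "(x,y) \<in> P \<longleftrightarrow> f x \<subseteq> f y"
  using join_embD(2)[OF assms] f_finite[OF assms(1,2)] f_finite[OF assms(1,3)]
  unfolding fin_subsets_nat_def by simp

lemma f_lub:
  assumes "join_emb P fin_subsets_nat f" "finite X" "X \<subseteq> Field P" "is_lub P X z"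
  shows "f z = \<Union>(f ` X)"
proof -
  have L: "is_lub (incl_rel {X. finite X}) (f ` X) (f z)"
    using join_embD(3)[OF assms(1-4)] unfolding fin_subsets_nat_def .
  have B: "f ` X \<subseteq> {X. finite X}"
    using assms(3) f_finite[OF assms(1)] by blast
  have A: "\<Union>(f ` X) \<in> {X. finite X}"
    using assms(2) B by auto
  show ?thesis using is_lub_incl_iff[OF A B] L by blast
qed

lemma is_lub_via_f:
  assumes "join_emb P fin_subsets_nat f" "X \<subseteq> Field P" "z \<in> Field P"
    "f z = \<Union>(f ` X)"
  shows "is_lub P X z"
  unfolding is_lub_def
proof (intro conjI ballI impI)
  show "z \<in> Field P" by fact
  fix y assume y: "y \<in> X"
  then have "f y \<subseteq> f z" using assms(4) by auto
  then show "(y,z) \<in> P" using assms y f_ord[OF assms(1)] by auto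
next
  fix w assume w: "w \<in> Field P" "\<forall>y\<in>X. (y, w) \<in> P"
  have "\<forall>y\<in>X. f y \<subseteq> f w"
  proof
    fix y assume "y \<in> X"
    then show "f y \<subseteq> f w" using w assms(2) f_ord[OF assms(1), of y w] by auto
  qed
  then have "f z \<subseteq> f w" using assms(4) by auto
  then show "(z,w) \<in> P" using assms w f_ord[OF assms(1)] by auto
qed

lemma lub_exists:
  assumes "join_emb P fin_subsets_nat f" "join_semilattice_bot P"
    "finite X" "X \<subseteq> Field P"
  shows "\<exists>z. is_lub P X z"
  using assms(3,4)
proof (induction X rule: finite_induct)
  case empty
  then obtain b where "b \<in> Field P" "\<forall>x\<in>Field P. (b,x) \<in> P"
    using assms(2) unfolding join_semilattice_bot_def by blast
  then show ?case unfolding is_lub_def by auto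
next
  case (insert x X)
  then obtain z where z: "is_lub P X z" by auto
  then have zF: "z \<in> Field P" unfolding is_lub_def by auto
  obtain w where w: "is_lub P {x,z} w"
    using assms(2) insert zF unfolding join_semilattice_bot_def by blast
  then have wF: "w \<in> Field P" unfolding is_lub_def by auto
  have "f w = f x \<union> f z" using f_lub[OF assms(1) _ _ w] insert zF by auto
  also have "f z = \<Union>(f ` X)" using f_lub[OF assms(1) _ _ z] insert by auto
  finally have "f w = \<Union>(f ` insert x X)" by auto
  then show ?case using is_lub_via_f[OF assms(1) _ wF] insert by blast
qed

lemma ideal_ub:
  assumes "I \<in> ideals P" "finite F" "F \<subseteq> I" "trans P"
  shows "\<exists>u\<in>I. \<forall>w\<in>F. (w,u) \<in> P"
  using assms(2,3)
proof (induction F rule: finite_induct)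
  case empty
  then show ?case using assms(1) unfolding ideals_def by auto
next
  case (insert x F)
  then obtain u where "u \<in> I" "\<forall>w\<in>F. (w,u) \<in> P" by auto
  moreover obtain z where "z \<in> I" "(x,z) \<in> P" "(u,z) \<in> P"
    using assms(1) insert \<open>u \<in> I\<close> unfolding ideals_def by blast
  ultimately have "\<forall>w\<in>insert x F. (w, z) \<in> P"
    using transD[OF assms(4)] by blast
  then show ?case using \<open>z \<in> I\<close> by blast
qed




lemma ideal_sub: "I \<in> ideals P \<Longrightarrow> I \<subseteq> Field P"
  unfolding ideals_def by blast

lemma ideal_down: "I \<in> ideals P \<Longrightarrow> x \<in> I \<Longrightarrow> (y,x) \<in> P \<Longrightarrow> y \<in> I"
  unfolding ideals_def by blast

lemma ideal_support:
  assumes fe: "join_emb P fin_subsets_nat f" and tr: "trans P" and I: "I \<in> ideals P"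
    and z: "z \<in> Field P" and sub: "f z \<subseteq> \<Union>(f ` I)"
  shows "z \<in> I"
proof -
  have "\<forall>p\<in>f z. \<exists>w. w \<in> I \<and> p \<in> f w" using sub by blast
  then obtain g where g: "\<And>p. p \<in> f z \<Longrightarrow> g p \<in> I \<and> p \<in> f (g p)" by metis
  have fin: "finite (g ` f z)" using f_finite[OF fe z] by simp
  have gI: "g ` f z \<subseteq> I" using g by blast
  obtain u where u: "u \<in> I" "\<forall>w\<in>g ` f z. (w,u) \<in> P"
    using ideal_ub[OF I fin gI tr] by blast
  have uF: "u \<in> Field P" using u(1) ideal_sub[OF I] by blast
  have "f z \<subseteq> f u"
  proof
    fix p assume p: "p \<in> f z"
    then have "(g p, u) \<in> P" "g p \<in> Field P" using u g ideal_sub[OF I] by blast+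
    then have "f (g p) \<subseteq> f u" using f_ord[OF fe _ uF] by blast
    then show "p \<in> f u" using g[OF p] by blast
  qed
  then have "(z,u) \<in> P" using f_ord[OF fe z uF] by blast
  then show ?thesis using ideal_down[OF I u(1)] by blast
qed

locale setting =
  fixes r :: "'a rel" and P :: "'p rel" and f :: "'p \<Rightarrow> nat set" and H :: "'a set \<Rightarrow> 'p set"
  assumes wo: "Well_order r" and cnt: "countable (Field r)" and inf: "infinite (Field r)"
    and js: "join_semilattice_bot P" and fe: "join_emb P fin_subsets_nat f"
    and H_ideal: "\<And>X. X \<in> init_segs r \<Longrightarrow> H X \<in> ideals P"
    and H_mono: "\<And>X Y. X \<in> init_segs r \<Longrightarrow> Y \<in> init_segs r \<Longrightarrow> X \<subseteq> Y \<longleftrightarrow> H X \<subseteq> H Y"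
begin

lemma r_refl: "a \<in> Field r \<Longrightarrow> (a,a) \<in> r"
  using wo unfolding order_on_defs refl_on_def by blast
lemma r_trans: "(a,b) \<in> r \<Longrightarrow> (b,c) \<in> r \<Longrightarrow> (a,c) \<in> r"
  using wo unfolding order_on_defs trans_def by blast
lemma r_antisym: "(a,b) \<in> r \<Longrightarrow> (b,a) \<in> r \<Longrightarrow> a = b"
  using wo unfolding order_on_defs antisym_def by blast
lemma r_total: "a \<in> Field r \<Longrightarrow> b \<in> Field r \<Longrightarrow> (a,b) \<in> r \<or> (b,a) \<in> r"
proof -
  assume ab: "a \<in> Field r" "b \<in> Field r"
  have "total_on (Field r) r" using wo unfolding order_on_defs by blast
  then show ?thesis using ab r_refl[OF ab(1)] unfolding total_on_def by (cases "a = b") auto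
qed
lemma r_wf: "wf (r - Id)"
  using wo unfolding order_on_defs by blast
lemma r_field: "(a,b) \<in> r \<Longrightarrow> a \<in> Field r \<and> b \<in> Field r"
  unfolding Field_def by blast

lemma P_trans: "trans P"
  using js unfolding join_semilattice_bot_def order_on_defs by blast

definition Dn where "Dn a = {b. (b,a) \<in> r \<and> b \<noteq> a}"
definition Up where "Up a = {b. (b,a) \<in> r}"

lemma Dn_seg: "Dn a \<in> init_segs r"
  unfolding init_segs_def Dn_def using r_field r_trans r_antisym by blast
lemma Up_seg: "Up a \<in> init_segs r"
  unfolding init_segs_def Up_def using r_field r_trans by blast

lemma H_Dn_Up: "a \<in> Field r \<Longrightarrow> \<not> H (Up a) \<subseteq> H (Dn a)"
  using H_mono[OF Up_seg Dn_seg] r_refl unfolding Up_def Dn_def by blast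

definition yy where "yy a = (SOME y. y \<in> H (Up a) - H (Dn a))"

lemma yy: "a \<in> Field r \<Longrightarrow> yy a \<in> H (Up a) - H (Dn a)"
proof -
  assume "a \<in> Field r"
  then have "\<exists>y. y \<in> H (Up a) - H (Dn a)" using H_Dn_Up by blast
  then show ?thesis unfolding yy_def by (rule someI_ex)
qed

lemma yyF: "a \<in> Field r \<Longrightarrow> yy a \<in> Field P"
  using yy ideal_sub[OF H_ideal[OF Up_seg]] by blast

definition U where "U X = \<Union>(f ` H X)"

lemma yy_not: "a \<in> Field r \<Longrightarrow> \<not> f (yy a) \<subseteq> U (Dn a)"
  using ideal_support[OF fe P_trans H_ideal[OF Dn_seg] yyF] yy unfolding U_def by blast

definition cc where "cc a = (SOME p. p \<in> f (yy a) - U (Dn a))"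

lemma cc: "a \<in> Field r \<Longrightarrow> cc a \<in> f (yy a) \<and> cc a \<notin> U (Dn a)"
proof -
  assume "a \<in> Field r"
  then have "\<exists>p. p \<in> f (yy a) - U (Dn a)" using yy_not by blast
  then have "cc a \<in> f (yy a) - U (Dn a)" unfolding cc_def by (rule someI_ex)
  then show ?thesis by blast
qed

lemma below:
  assumes "(b,a) \<in> r" "b \<noteq> a" shows "f (yy b) \<subseteq> U (Dn a)"
proof -
  have "Up b \<subseteq> Dn a" unfolding Up_def Dn_def using assms r_trans r_antisym by blast
  then have "H (Up b) \<subseteq> H (Dn a)" using H_mono[OF Up_seg Dn_seg] by blast
  moreover have "yy b \<in> H (Up b)" using yy r_field assms by blast
  ultimately show ?thesis unfolding U_def by blast
qed

lemma cc_inj: "inj_on cc (Field r)"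
proof (rule inj_onI)
  fix a b assume ab: "a \<in> Field r" "b \<in> Field r" "cc a = cc b"
  show "a = b"
  proof (rule ccontr)
    assume ne: "a \<noteq> b"
    from r_total[OF ab(1,2)] show False
    proof
      assume "(a,b) \<in> r"
      then show False using below[of a b] ne cc[OF ab(1)] cc[OF ab(2)] ab(3) by auto
    next
      assume "(b,a) \<in> r"
      then show False using below[of b a] ne cc[OF ab(1)] cc[OF ab(2)] ab(3) by auto
    qed
  qed
qed

definition G where "G = {(b,a). a \<in> Field r \<and> b \<in> Field r \<and> b \<noteq> a \<and> cc b \<in> f (yy a)}"

lemma G_r: assumes "(b,a) \<in> G" shows "(b,a) \<in> r"
proof (rule ccontr)
  assume nr: "(b,a) \<notin> r"
  have ab: "a \<in> Field r" "b \<in> Field r" "b \<noteq> a" "cc b \<in> f (yy a)" using assms unfolding G_def by auto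
  have "(a,b) \<in> r" using r_total[OF ab(1,2)] nr by blast
  then have "f (yy a) \<subseteq> U (Dn b)" using below[of a b] ab(3) by blast
  then show False using cc[OF ab(2)] ab(4) by blast
qed

definition T where "T a = {b. (b,a) \<in> G\<^sup>*}"

lemma T_below_aux: "(b,x) \<in> G\<^sup>* \<Longrightarrow> x \<in> Field r \<Longrightarrow> (b,x) \<in> r"
proof (induction rule: converse_rtrancl_induct)
  case base then show ?case using r_refl by blast
next
  case (step y z)
  then show ?case using G_r r_trans by blast
qed

lemma T_below: "a \<in> Field r \<Longrightarrow> b \<in> T a \<Longrightarrow> (b,a) \<in> r"
  unfolding T_def using T_below_aux by blast

lemma T_Field: "a \<in> Field r \<Longrightarrow> T a \<subseteq> Field r"
  using T_below r_field by blast

lemma T_eq: "T a = insert a (\<Union>b\<in>{b. (b,a) \<in> G}. T b)"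
proof (rule set_eqI)
  fix x
  show "x \<in> T a \<longleftrightarrow> x \<in> insert a (\<Union>b\<in>{b. (b,a) \<in> G}. T b)"
  proof
    assume "x \<in> T a"
    then have "(x,a) \<in> G\<^sup>*" unfolding T_def by simp
    then show "x \<in> insert a (\<Union>b\<in>{b. (b,a) \<in> G}. T b)"
    proof (cases rule: rtranclE)
      case base then show ?thesis by simp
    next
      case (step y) then show ?thesis unfolding T_def by blast
    qed
  next
    assume "x \<in> insert a (\<Union>b\<in>{b. (b,a) \<in> G}. T b)"
    then show "x \<in> T a" unfolding T_def by (blast intro: rtrancl_into_rtrancl)
  qed
qed

lemma G_pred_fin: "a \<in> Field r \<Longrightarrow> finite {b. (b,a) \<in> G}"
proof -
  assume a: "a \<in> Field r"
  have "{b. (b,a) \<in> G} \<subseteq> cc -` f (yy a) \<inter> Field r" unfolding G_def by auto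
  moreover have "finite (cc -` f (yy a) \<inter> Field r)"
    using finite_vimage_IntI[OF f_finite[OF fe yyF[OF a]] cc_inj] .
  ultimately show ?thesis by (rule finite_subset)
qed

lemma T_fin: "a \<in> Field r \<Longrightarrow> finite (T a)"
proof (induction a rule: wf_induct[OF r_wf])
  case (1 a)
  have "\<forall>b\<in>{b. (b,a) \<in> G}. finite (T b)"
  proof
    fix b assume "b \<in> {b. (b,a) \<in> G}"
    then have "(b,a) \<in> r - Id" "b \<in> Field r" using G_r unfolding G_def by auto
    then show "finite (T b)" using 1 by blast
  qed
  then show ?case using T_eq[of a] G_pred_fin[OF 1(2)] by (metis finite_UN finite_insert)
qed

definition e where "e = to_nat_on (Field r)"
definition k where "k a = set_encode (e ` T a)"

lemma e_inj: "inj_on e (Field r)"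
  unfolding e_def using cnt by blast

lemma k_less:
  assumes G: "(b,a) \<in> G" shows "k b < k a"
proof -
  have ab: "a \<in> Field r" "b \<in> Field r" "b \<noteq> a" using G unfolding G_def by auto
  have sub: "T b \<subseteq> T a" unfolding T_def using G by (auto intro: rtrancl_into_rtrancl)
  have aTb: "a \<notin> T b" using T_below[OF ab(2)] G_r[OF G] r_antisym ab(3) by blast
  have aTa: "a \<in> T a" unfolding T_def by blast
  have "e a \<notin> e ` T b" using e_inj T_Field[OF ab(2)] ab(1) aTb by (meson inj_on_image_mem_iff)
  moreover have "e ` T b \<subseteq> e ` T a" using sub by blast
  moreover have "finite (e ` T a)" using T_fin[OF ab(1)] by blast
  ultimately show ?thesis unfolding k_def set_encode_def
    using sum_strict_mono2[of "e ` T a" "e ` T b" "e a" "(^) (2::nat)"] aTa by auto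
qed

lemma k_inj: "inj_on k (Field r)"
proof (rule inj_onI)
  fix a b assume ab: "a \<in> Field r" "b \<in> Field r" "k a = k b"
  have fa: "finite (e ` T a)" using T_fin[OF ab(1)] by blast
  have fb: "finite (e ` T b)" using T_fin[OF ab(2)] by blast
  have "set_encode (e ` T a) = set_encode (e ` T b)" using ab(3) unfolding k_def .
  then have "e ` T a = e ` T b" using set_encode_eq[OF fa fb] by simp
  then have eq: "T a = T b" using inj_on_image_eq_iff[OF e_inj T_Field[OF ab(1)] T_Field[OF ab(2)]] by simp
  have "a \<in> T a" "b \<in> T b" unfolding T_def by blast+
  then have "a \<in> T b" "b \<in> T a" using eq by simp_all
  then have "(a,b) \<in> r" "(b,a) \<in> r" using T_below ab(1,2) by blast+
  then show "a = b" using r_antisym by blast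
qed

end




context setting
begin

definition N where "N = k ` Field r"
definition psi where "psi = the_inv_into (Field r) k"

lemma psi_N: "n \<in> N \<Longrightarrow> psi n \<in> Field r \<and> k (psi n) = n"
  unfolding N_def psi_def using k_inj by (auto simp: the_inv_into_f_f)

lemma psi_k: "a \<in> Field r \<Longrightarrow> psi (k a) = a"
  unfolding psi_def using k_inj by (simp add: the_inv_into_f_f)

lemma psi_inj: "m \<in> N \<Longrightarrow> n \<in> N \<Longrightarrow> psi m = psi n \<Longrightarrow> m = n"
  using psi_N by metis

definition S :: "nat rel" where "S = {(m,n). m \<in> N \<and> n \<in> N \<and> (psi m, psi n) \<in> r \<and> m \<le> n}"
definition L1 :: "nat rel" where "L1 = {(m,n). m \<in> N \<and> n \<in> N \<and> (psi m, psi n) \<in> r}"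
definition L2 :: "nat rel" where "L2 = {(m,n). m \<in> N \<and> n \<in> N \<and> m \<le> n}"

lemma N_inf: "infinite N"
  unfolding N_def using inf k_inj finite_image_iff by blast

lemma Field_L1: "Field L1 = N"
proof
  show "Field L1 \<subseteq> N" unfolding L1_def Field_def by blast
  show "N \<subseteq> Field L1"
  proof
    fix n assume "n \<in> N"
    then have "(n,n) \<in> L1" unfolding L1_def using psi_N r_refl by blast
    then show "n \<in> Field L1" unfolding Field_def by blast
  qed
qed

lemma Field_L2: "Field L2 = N"
proof
  show "Field L2 \<subseteq> N" unfolding L2_def Field_def by blast
  show "N \<subseteq> Field L2"
  proof
    fix n assume "n \<in> N"
    then have "(n,n) \<in> L2" unfolding L2_def by blast
    then show "n \<in> Field L2" unfolding Field_def by blast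
  qed
qed

lemma S_eq: "S = L1 \<inter> L2"
  unfolding S_def L1_def L2_def by blast

lemma S_refl: "n \<in> N \<Longrightarrow> (n,n) \<in> S"
  unfolding S_def using psi_N r_refl by blast

lemma S_trans: "(m,n) \<in> S \<Longrightarrow> (n,p) \<in> S \<Longrightarrow> (m,p) \<in> S"
  unfolding S_def using r_trans by auto

lemma Field_S: "Field S = N"
proof
  show "Field S \<subseteq> N" unfolding S_def Field_def by blast
  show "N \<subseteq> Field S" using S_refl unfolding Field_def by blast
qed

lemma L1_lin: "Linear_order L1"
  unfolding Field_L1 order_on_defs
proof (intro conjI)
  show "L1 \<subseteq> N \<times> N" unfolding L1_def by blast
  show "refl_on N L1" unfolding refl_on_def L1_def using psi_N r_refl by blast
  show "trans L1" unfolding trans_def L1_def using r_trans by blast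
  show "antisym L1" unfolding antisym_def L1_def using r_antisym psi_inj by blast
  show "total_on N L1" unfolding total_on_def L1_def using r_total psi_N by blast
qed

lemma L2_lin: "Linear_order L2"
  unfolding Field_L2 order_on_defs
proof (intro conjI)
  show "L2 \<subseteq> N \<times> N" unfolding L2_def by blast
  show "refl_on N L2" unfolding refl_on_def L2_def by blast
  show "trans L2" unfolding trans_def L2_def by auto
  show "antisym L2" unfolding antisym_def L2_def by auto
  show "total_on N L2" unfolding total_on_def L2_def by auto
qed

lemma L1_iso: "ord_iso L1 r"
proof (rule ord_isoI)
  have "bij_betw k (Field r) N" unfolding N_def using k_inj by (simp add: bij_betw_def)
  then show "bij_betw psi (Field L1) (Field r)" unfolding Field_L1 psi_def
    by (rule bij_betw_the_inv_into)
  fix a b assume "a \<in> Field L1" "b \<in> Field L1"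
  then have "a \<in> N" "b \<in> N" using Field_L1 by auto
  then show "(a,b) \<in> L1 \<longleftrightarrow> (psi a, psi b) \<in> r" unfolding L1_def by blast
qed

lemma Field_omega: "Field omega_rel = UNIV"
  unfolding omega_rel_def Field_def by auto

lemma L2_iso: "ord_iso L2 omega_rel"
proof (rule ord_isoI)
  let ?g = "the_inv_into UNIV (enumerate N)"
  have bij: "bij_betw (enumerate N) UNIV N" using bij_enumerate[OF N_inf] .
  show "bij_betw ?g (Field L2) (Field omega_rel)" unfolding Field_L2 Field_omega
    by (rule bij_betw_the_inv_into[OF bij])
  fix a b assume "a \<in> Field L2" "b \<in> Field L2"
  then have ab: "a \<in> N" "b \<in> N" using Field_L2 by auto
  then have "enumerate N (?g a) = a" "enumerate N (?g b) = b"
    using bij unfolding bij_betw_def by (auto simp: f_the_inv_into_f)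
  then have "a \<le> b \<longleftrightarrow> ?g a \<le> ?g b"
    using enumerate_mono_le_iff[OF N_inf, of "?g a" "?g b"] by simp
  then show "(a,b) \<in> L2 \<longleftrightarrow> (?g a, ?g b) \<in> omega_rel"
    using ab unfolding L2_def omega_rel_def by blast
qed

lemma sierp: "sierpinskisation r S"
  unfolding sierpinskisation_def
  using L1_lin L2_lin Field_L1 Field_L2 S_eq L1_iso L2_iso by blast

end




context setting
begin

definition DS where "DS = {D. finite D \<and> D \<subseteq> N \<and> (\<forall>n\<in>D. \<forall>m. (m,n) \<in> S \<longrightarrow> m \<in> D)}"

lemma S_le: "(m,n) \<in> S \<Longrightarrow> m \<le> n"
  unfolding S_def by blast

lemma S_N: "(m,n) \<in> S \<Longrightarrow> m \<in> N \<and> n \<in> N"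
  unfolding S_def by blast

lemma fg_eq: "fg_init_segs S = incl_rel DS"
proof -
  have "{{y \<in> Field S. \<exists>x\<in>F. (y,x) \<in> S} | F. finite F \<and> F \<subseteq> Field S} = DS"
  proof
    show "{{y \<in> Field S. \<exists>x\<in>F. (y,x) \<in> S} | F. finite F \<and> F \<subseteq> Field S} \<subseteq> DS"
    proof
      fix D assume "D \<in> {{y \<in> Field S. \<exists>x\<in>F. (y,x) \<in> S} | F. finite F \<and> F \<subseteq> Field S}"
      then obtain F where F: "finite F" "D = {y \<in> N. \<exists>x\<in>F. (y,x) \<in> S}" using Field_S by auto
      have "D \<subseteq> (\<Union>x\<in>F. {..x})" using F(2) S_le by auto
      then have "finite D" using F(1) by (meson finite_UN_I finite_atMost finite_subset)
      moreover have "D \<subseteq> N" using F(2) by blast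
      moreover have "\<forall>n\<in>D. \<forall>m. (m,n) \<in> S \<longrightarrow> m \<in> D" using F(2) S_trans S_N by blast
      ultimately show "D \<in> DS" unfolding DS_def by blast
    qed
    show "DS \<subseteq> {{y \<in> Field S. \<exists>x\<in>F. (y,x) \<in> S} | F. finite F \<and> F \<subseteq> Field S}"
    proof
      fix D assume D: "D \<in> DS"
      then have "D = {y \<in> Field S. \<exists>x\<in>D. (y,x) \<in> S}"
        unfolding DS_def Field_S using S_refl by blast
      moreover have "finite D \<and> D \<subseteq> Field S" using D unfolding DS_def Field_S by blast
      ultimately show "D \<in> {{y \<in> Field S. \<exists>x\<in>F. (y,x) \<in> S} | F. finite F \<and> F \<subseteq> Field S}"
        by blast
    qed
  qed
  then show ?thesis unfolding fg_init_segs_def by simp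
qed

definition y' where "y' n = yy (psi n)"

lemma y'F: "n \<in> N \<Longrightarrow> y' n \<in> Field P"
  unfolding y'_def using yyF psi_N by blast

lemma crux:
  assumes E: "E \<in> DS" and n: "n \<in> N" "n \<notin> E" and m: "m \<in> E"
  shows "cc (psi n) \<notin> f (y' m)"
proof
  assume c: "cc (psi n) \<in> f (y' m)"
  have mN: "m \<in> N" using E m unfolding DS_def by blast
  have ne: "m \<noteq> n" using m n by blast
  then have "psi n \<noteq> psi m" using psi_inj mN n(1) by metis
  then have G: "(psi n, psi m) \<in> G" unfolding G_def using psi_N mN n(1) c unfolding y'_def by blast
  have "k (psi n) < k (psi m)" using k_less[OF G] .
  then have "n \<le> m" using psi_N mN n(1) by simp
  moreover have "(psi n, psi m) \<in> r" using G_r[OF G] .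
  ultimately have "(n,m) \<in> S" unfolding S_def using mN n(1) by blast
  then have "n \<in> E" using E m unfolding DS_def by blast
  then show False using n by blast
qed

lemma cc_in: "n \<in> N \<Longrightarrow> cc (psi n) \<in> f (y' n)"
  unfolding y'_def using cc psi_N by blast

definition g where "g D = (SOME z. is_lub P (y' ` D) z)"

lemma g_lub: assumes "D \<in> DS" shows "is_lub P (y' ` D) (g D)"
proof -
  have "finite (y' ` D)" "y' ` D \<subseteq> Field P" using assms y'F unfolding DS_def by auto
  then have "\<exists>z. is_lub P (y' ` D) z" using lub_exists[OF fe js] by blast
  then show ?thesis unfolding g_def by (rule someI_ex)
qed

lemma gF: "D \<in> DS \<Longrightarrow> g D \<in> Field P"
  using g_lub unfolding is_lub_def by blast

lemma f_g: assumes "D \<in> DS" shows "f (g D) = (\<Union>n\<in>D. f (y' n))"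
proof -
  have "finite (y' ` D)" "y' ` D \<subseteq> Field P" using assms y'F unfolding DS_def by auto
  then show ?thesis using f_lub[OF fe _ _ g_lub[OF assms]] by simp
qed

lemma g_ord: assumes D: "D \<in> DS" and E: "E \<in> DS"
  shows "D \<subseteq> E \<longleftrightarrow> (g D, g E) \<in> P"
proof -
  have "(g D, g E) \<in> P \<longleftrightarrow> f (g D) \<subseteq> f (g E)" using f_ord[OF fe gF[OF D] gF[OF E]] .
  also have "\<dots> \<longleftrightarrow> (\<Union>n\<in>D. f (y' n)) \<subseteq> (\<Union>n\<in>E. f (y' n))" using f_g D E by simp
  also have "\<dots> \<longleftrightarrow> D \<subseteq> E"
  proof
    assume sub: "(\<Union>n\<in>D. f (y' n)) \<subseteq> (\<Union>n\<in>E. f (y' n))"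
    show "D \<subseteq> E"
    proof
      fix n assume nD: "n \<in> D"
      show "n \<in> E"
      proof (rule ccontr)
        assume nE: "n \<notin> E"
        have nN: "n \<in> N" using D nD unfolding DS_def by blast
        have "cc (psi n) \<in> (\<Union>n\<in>E. f (y' n))" using sub cc_in[OF nN] nD by blast
        then show False using crux[OF E nN nE] by blast
      qed
    qed
  qed blast
  finally show ?thesis by simp
qed

lemma DS_Union: "finite X \<Longrightarrow> X \<subseteq> DS \<Longrightarrow> \<Union>X \<in> DS"
  unfolding DS_def by blast

lemma g_emb: "join_emb (incl_rel DS) P g"
  unfolding join_emb_def Field_incl_rel
proof (intro conjI allI impI ballI)
  show "g ` DS \<subseteq> Field P" using gF by blast
next
  fix x y assume "x \<in> DS" "y \<in> DS"
  then show "(x,y) \<in> incl_rel DS \<longleftrightarrow> (g x, g y) \<in> P" using g_ord by simp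
next
  fix X x assume A: "finite X \<and> X \<subseteq> DS \<and> is_lub (incl_rel DS) X x"
  then have U: "\<Union>X \<in> DS" using DS_Union by blast
  then have x: "x = \<Union>X" using is_lub_incl_iff[OF U] A by blast
  have "f (g x) = \<Union>(f ` g ` X)"
  proof -
    have "f (g x) = (\<Union>n\<in>\<Union>X. f (y' n))" using f_g U x by simp
    also have "\<dots> = (\<Union>E\<in>X. \<Union>n\<in>E. f (y' n))" by blast
    also have "\<dots> = (\<Union>E\<in>X. f (g E))" using f_g A by auto
    finally show ?thesis by simp
  qed
  moreover have "g ` X \<subseteq> Field P" using gF A by blast
  ultimately show "is_lub P (g ` X) (g x)" using is_lub_via_f[OF fe _ gF] U x by blast
qed

lemma DS_lat: "join_semilattice_bot (incl_rel DS)"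
  unfolding join_semilattice_bot_def Field_incl_rel
proof (intro conjI ballI)
  show "partial_order_on DS (incl_rel DS)" unfolding order_on_defs
    unfolding refl_on_def trans_def antisym_def by auto
  show "\<exists>b\<in>DS. \<forall>x\<in>DS. (b,x) \<in> incl_rel DS"
  proof -
    have E: "{} \<in> DS" unfolding DS_def by simp
    then have "\<forall>x\<in>DS. ({},x) \<in> incl_rel DS" by (simp only: incl_rel_iff) blast
    then show ?thesis using E by blast
  qed
  fix x y assume "x \<in> DS" "y \<in> DS"
  then have "{x,y} \<subseteq> DS" by blast
  then have "\<Union>{x,y} \<in> DS" "{x,y} \<subseteq> DS" using DS_Union[of "{x,y}"] by simp_all
  then show "\<exists>z. is_lub (incl_rel DS) {x,y} z" using is_lub_incl_Union by blast
qed

definition Phi where "Phi X = {D \<in> DS. psi ` D \<subseteq> X}"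

lemma Phi_ideal: "Phi X \<in> ideals (incl_rel DS)"
  unfolding ideals_def Field_incl_rel
proof (intro CollectI conjI ballI allI impI)
  show "Phi X \<subseteq> DS" unfolding Phi_def by blast
  have "{} \<in> DS" unfolding DS_def by simp
  then show "Phi X \<noteq> {}" unfolding Phi_def by blast
next
  fix x y assume "x \<in> Phi X" "(y,x) \<in> incl_rel DS"
  then show "y \<in> Phi X" unfolding Phi_def by auto
next
  fix x y assume "x \<in> Phi X" "y \<in> Phi X"
  then have xy: "{x,y} \<subseteq> DS" "psi ` (x \<union> y) \<subseteq> X" unfolding Phi_def by auto
  then have "\<Union>{x,y} \<in> DS" using DS_Union[of "{x,y}"] by simp
  then have "x \<union> y \<in> Phi X" using xy unfolding Phi_def by simp
  then show "\<exists>z\<in>Phi X. (x,z) \<in> incl_rel DS \<and> (y,z) \<in> incl_rel DS"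
    using \<open>x \<in> Phi X\<close> \<open>y \<in> Phi X\<close> unfolding Phi_def by auto
qed

lemma Phi_iff: assumes X: "X \<in> init_segs r" and Y: "Y \<in> init_segs r"
  shows "X \<subseteq> Y \<longleftrightarrow> Phi X \<subseteq> Phi Y"
proof
  assume "X \<subseteq> Y" then show "Phi X \<subseteq> Phi Y" unfolding Phi_def by blast
next
  assume sub: "Phi X \<subseteq> Phi Y"
  show "X \<subseteq> Y"
  proof
    fix a assume a: "a \<in> X"
    have aF: "a \<in> Field r" using X a unfolding init_segs_def by blast
    define n where "n = k a"
    have nN: "n \<in> N" unfolding n_def N_def using aF by blast
    have pn: "psi n = a" unfolding n_def using psi_k[OF aF] .
    define D0 where "D0 = {m. (m,n) \<in> S}"
    have "D0 \<subseteq> {..n}" unfolding D0_def using S_le by blast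
    then have "finite D0" using finite_subset by blast
    moreover have "D0 \<subseteq> N" unfolding D0_def using S_N by blast
    moreover have "\<forall>m\<in>D0. \<forall>l. (l,m) \<in> S \<longrightarrow> l \<in> D0" unfolding D0_def using S_trans by blast
    ultimately have D0: "D0 \<in> DS" unfolding DS_def by blast
    have "psi ` D0 \<subseteq> X"
    proof
      fix b assume "b \<in> psi ` D0"
      then obtain m where "m \<in> D0" "b = psi m" by blast
      then have "(b, a) \<in> r" unfolding D0_def S_def using pn by blast
      then show "b \<in> X" using X a unfolding init_segs_def by blast
    qed
    then have "D0 \<in> Phi Y" using sub D0 unfolding Phi_def by blast
    moreover have "n \<in> D0" unfolding D0_def using S_refl nN by blast
    ultimately show "a \<in> Y" unfolding Phi_def using pn by blast
  qed
qed

lemma DS_J: "J_alpha r (incl_rel DS)"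
  unfolding J_alpha_def
proof (intro conjI exI)
  show "join_semilattice_bot (incl_rel DS)" by (rule DS_lat)
  show "Phi ` init_segs r \<subseteq> ideals (incl_rel DS)" using Phi_ideal by blast
  have inj: "inj_on Phi (init_segs r)"
    by (rule inj_onI) (use Phi_iff in blast)
  show "ord_iso (incl_rel (Phi ` init_segs r)) (incl_rel (init_segs r))"
    by (rule ord_iso_incl_rel[OF inj refl Phi_iff])
qed

lemma main: "\<exists>S :: nat rel. sierpinskisation r S \<and> J_alpha r (fg_init_segs S) \<and>
           (\<exists>g. join_emb (fg_init_segs S) P g)"
  using sierp DS_J g_emb fg_eq by metis

end




theorem theorem2p5:
  fixes r :: "'a rel" and P :: "'p rel"
  assumes "Well_order r" and "countable (Field r)" and "infinite (Field r)"
    and "J_alpha r P"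
    and "\<exists>f. join_emb P fin_subsets_nat f"
  shows "\<exists>S :: nat rel. sierpinskisation r S \<and> J_alpha r (fg_init_segs S) \<and>
           (\<exists>g. join_emb (fg_init_segs S) P g)"
proof -
  obtain f where fe: "join_emb P fin_subsets_nat f" using assms(5) by blast
  have js: "join_semilattice_bot P" using assms(4) unfolding J_alpha_def by blast
  obtain C where C: "C \<subseteq> ideals P" "ord_iso (incl_rel C) (incl_rel (init_segs r))"
    using assms(4) unfolding J_alpha_def by blast
  obtain f0 where bij: "bij_betw f0 C (init_segs r)"
    and ord: "\<And>a b. a \<in> C \<Longrightarrow> b \<in> C \<Longrightarrow> (a,b) \<in> incl_rel C \<longleftrightarrow> (f0 a, f0 b) \<in> incl_rel (init_segs r)"
    using C(2) unfolding ord_iso_def Field_incl_rel by blast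
  define H where "H = the_inv_into C f0"
  have inj: "inj_on f0 C" and img: "f0 ` C = init_segs r" using bij unfolding bij_betw_def by auto
  have HC: "X \<in> init_segs r \<Longrightarrow> H X \<in> C" for X
    unfolding H_def using the_inv_into_into[OF inj, of X C] img by simp
  have fH: "X \<in> init_segs r \<Longrightarrow> f0 (H X) = X" for X
    unfolding H_def using f_the_inv_into_f[OF inj, of X] img by simp
  have Hm: "X \<subseteq> Y \<longleftrightarrow> H X \<subseteq> H Y" if "X \<in> init_segs r" "Y \<in> init_segs r" for X Y
    using ord[OF HC[OF that(1)] HC[OF that(2)]] fH that HC by simp
  interpret setting r P f H
  proof
    show "Well_order r" "countable (Field r)" "infinite (Field r)" by fact+
    show "join_semilattice_bot P" by fact
    show "join_emb P fin_subsets_nat f" by fact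
    show "\<And>X. X \<in> init_segs r \<Longrightarrow> H X \<in> ideals P" using HC C(1) by blast
    show "\<And>X Y. X \<in> init_segs r \<Longrightarrow> Y \<in> init_segs r \<Longrightarrow> X \<subseteq> Y \<longleftrightarrow> H X \<subseteq> H Y" by (rule Hm)
  qed
  show ?thesis by (rule main)
qed


end
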